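(* For $\epsilon\in\mathbb{C}$, the Poisson bracket $\Psi(\Pi_0+\epsilon\Pi_\infty)$ on $V=\mathrm{Mat}_{k\times k}(\mathbb{C})\oplus\mathrm{Mat}_{k\times k}(\mathbb{C})$, where $\Pi_0=[xx^*,x^*]+[yx^*,y^*]$ and $\Pi_\infty=[yy^*,yxx^*+y^2y^*]$, is generically nondegenerate, and the corresponding symplectic form is $\mathrm{tr}\,d(Y^{-1}-\epsilon X)^{-1}\wedge d\big(X(Y^{-1}-\epsilon X)\big)$.
   Context: $Q$ is the quiver with one vertex and two loops $x,y$; $\mathbb{C}\bar Q=\mathbb{C}\langle x,y,x^*,y^*\rangle$, graded by the number of starred letters. $\mathcal{V}Q$ is the quotient of $\mathbb{C}\bar Q$ by the span of $PR-(-1)^{pr}RP$ for $P,R$ homogeneous of degrees $p,r$; $[u,v]=uv-vu$. $\mathrm{Rep}(Q,k)=V$, with the point $(X,Y)$ assigning $X$ to $x$ and $Y$ to $y$. Cotangent vectors at $(X,Y)$ are pairs $(A,B)$ paired with tangent vectors $(U,W)$ by $\mathrm{tr}(AU+BW)$. For a monomial $P=P_1a_1^*P_2\cdots P_ra_r^*P_{r+1}$ ($P_i$ monomials in $x,y$, $a_i\in\{x,y\}$), $\Psi(P)$ is the $r$-vector field on $V$ obtained by restricting to alternating tensors the form $(C^1,\dots,C^r)\mapsto\mathrm{tr}\big(P_1(X,Y)C^1_{a_1}P_2(X,Y)\cdots C^r_{a_r}P_{r+1}(X,Y)\big)$, with $C^j_x=A^j$, $C^j_y=B^j$ for $C^j=(A^j,B^j)$;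 $\Psi$ extends linearly and descends to $\mathcal{V}Q$. A generically nondegenerate Poisson bivector determines a symplectic form (its inverse) on its nondegeneracy locus. *)

theory Defs
  imports "HOL-Analysis.Analysis"
begin

text \<open>Square complex matrices of size k = CARD('n); points, tangent vectors and
  cotangent vectors of V = Mat_k(C) + Mat_k(C) are all pairs of such matrices.\<close>

type_synonym 'n cmat = "complex^'n^'n"
type_synonym 'n vpt = "'n cmat \<times> 'n cmat"

definition smat :: "complex \<Rightarrow> ('n::finite) cmat \<Rightarrow> ('n::finite) cmat" where
  "smat c A = (\<chi> i j. c * A $ i $ j)"

text \<open>Letters of the doubled quiver: x, y, x*, y*.  Words are monomials of the
  free algebra C<x,y,x*,y*>, and elements of C Qbar are formal linear combinations.\<close>

datatype letter = Lx | Ly | Lxs | Lys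

type_synonym word = "letter list"
type_synonym ncpoly = "(complex \<times> word) list"

definition gen :: "letter \<Rightarrow> ncpoly" where
  "gen l = [(1, [l])]"

definition nc_add :: "ncpoly \<Rightarrow> ncpoly \<Rightarrow> ncpoly" where
  "nc_add P R = P @ R"

definition nc_smult :: "complex \<Rightarrow> ncpoly \<Rightarrow> ncpoly" where
  "nc_smult c P = map (\<lambda>(a, w). (c * a, w)) P"

definition nc_mult :: "ncpoly \<Rightarrow> ncpoly \<Rightarrow> ncpoly" where
  "nc_mult P R = concat (map (\<lambda>(a, u). map (\<lambda>(b, v). (a * b, u @ v)) R) P)"

definition nc_comm :: "ncpoly \<Rightarrow> ncpoly \<Rightarrow> ncpoly" where
  "nc_comm P R = nc_add (nc_mult P R) (nc_smult (-1) (nc_mult R P))"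

definition starred :: "letter \<Rightarrow> bool" where
  "starred l \<longleftrightarrow> l = Lxs \<or> l = Lys"

definition wdeg :: "word \<Rightarrow> nat" where
  "wdeg w = length (filter starred w)"

text \<open>Evaluation of a monomial P1 a1* P2 ... ar* P(r+1) at the point p = (X,Y), with the
  starred letters replaced successively by the components C^j_{a_j} of the cotangent
  vectors in cs (C_x = A, C_y = B for C = (A,B)).\<close>

fun ev_word :: "('n::finite) vpt \<Rightarrow> ('n::finite) vpt list \<Rightarrow> word \<Rightarrow> ('n::finite) cmat" where
  "ev_word p cs [] = mat 1"
| "ev_word p cs (Lx # w) = fst p ** ev_word p cs w"
| "ev_word p cs (Ly # w) = snd p ** ev_word p cs w"
| "ev_word p cs (Lxs # w) = fst (hd cs) ** ev_word p (tl cs) w"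
| "ev_word p cs (Lys # w) = snd (hd cs) ** ev_word p (tl cs) w"

definition psi_tensor :: "ncpoly \<Rightarrow> ('n::finite) vpt \<Rightarrow> ('n::finite) vpt list \<Rightarrow> complex" where
  "psi_tensor P p cs =
     sum_list (map (\<lambda>(c, w). if wdeg w = length cs then c * trace (ev_word p cs w) else 0) P)"

text \<open>Psi of a degree-2 element: the bivector obtained by restricting the bilinear form to
  alternating tensors, with the convention a \<and> b = (a \<otimes> b - b \<otimes> a)/2.\<close>

definition psi_bivector :: "ncpoly \<Rightarrow> ('n::finite) vpt \<Rightarrow> ('n::finite) vpt \<Rightarrow> ('n::finite) vpt \<Rightarrow> complex" where
  "psi_bivector P p \<alpha> \<beta> = (psi_tensor P p [\<alpha>, \<beta>] - psi_tensor P p [\<beta>, \<alpha>]) / 2"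

definition vpair :: "('n::finite) vpt \<Rightarrow> ('n::finite) vpt \<Rightarrow> complex" where
  "vpair \<alpha> u = trace (fst \<alpha> ** fst u + snd \<alpha> ** snd u)"

definition nondegenerate :: "(('n::finite) vpt \<Rightarrow> ('n::finite) vpt \<Rightarrow> complex) \<Rightarrow> bool" where
  "nondegenerate \<pi> \<longleftrightarrow> (\<forall>\<alpha>. \<alpha> \<noteq> 0 \<longrightarrow> (\<exists>\<beta>. \<pi> \<alpha> \<beta> \<noteq> 0))"

text \<open>omega is the inverse of the bivector pi: omega(pi#(alpha), v) = <alpha, v>, where
  pi#(alpha) is the tangent vector u with <gamma, u> = pi(alpha, gamma) for all gamma.\<close>

definition inverse_form ::
  "(('n::finite) vpt \<Rightarrow> ('n::finite) vpt \<Rightarrow> complex) \<Rightarrow> (('n::finite) vpt \<Rightarrow> ('n::finite) vpt \<Rightarrow> complex) \<Rightarrow> bool" where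
  "inverse_form \<pi> \<omega> \<longleftrightarrow>
     (\<forall>\<alpha> u. (\<forall>\<gamma>. vpair \<gamma> u = \<pi> \<alpha> \<gamma>) \<longrightarrow> (\<forall>v. \<omega> u v = vpair \<alpha> v))"

definition dmat :: "(('n::finite) vpt \<Rightarrow> ('n::finite) cmat) \<Rightarrow> ('n::finite) vpt \<Rightarrow> ('n::finite) vpt \<Rightarrow> ('n::finite) cmat" where
  "dmat F p u = vector_derivative (\<lambda>t::real. F (p + t *\<^sub>R u)) (at 0)"

definition tr_wedge ::
  "(('n::finite) vpt \<Rightarrow> ('n::finite) cmat) \<Rightarrow> (('n::finite) vpt \<Rightarrow> ('n::finite) cmat) \<Rightarrow> ('n::finite) vpt \<Rightarrow> ('n::finite) vpt \<Rightarrow> ('n::finite) vpt \<Rightarrow> complex" where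
  "tr_wedge F G p u v = trace (dmat F p u ** dmat G p v - dmat F p v ** dmat G p u)"

definition Pi0 :: ncpoly where
  "Pi0 = nc_add (nc_comm (nc_mult (gen Lx) (gen Lxs)) (gen Lxs))
                (nc_comm (nc_mult (gen Ly) (gen Lxs)) (gen Lys))"

definition Pi_inf :: ncpoly where
  "Pi_inf = nc_comm (nc_mult (gen Ly) (gen Lys))
              (nc_add (nc_mult (gen Ly) (nc_mult (gen Lx) (gen Lxs)))
                      (nc_mult (gen Ly) (nc_mult (gen Ly) (gen Lys))))"

end

theory Submission
  imports Defs "HOL-Complex_Analysis.Conformal_Mappings"
begin


lemma inv_props:
  assumes "invertible (A::'a::semiring_1^'n^'n)"
  shows "A ** matrix_inv A = mat 1" "matrix_inv A ** A = mat 1"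
  using someI_ex[OF assms[unfolded invertible_def]] unfolding matrix_inv_def by auto

lemma det_tendsto:
  fixes C :: "'b \<Rightarrow> complex^'n^'n"
  assumes "(C \<longlongrightarrow> L) F"
  shows "((\<lambda>t. det (C t)) \<longlongrightarrow> det L) F"
  unfolding det_def
  by (intro tendsto_intros tendsto_vec_nth assms)

lemma inv_entry:
  fixes A :: "complex^'n^'n"
  assumes "invertible A"
  shows "matrix_inv A $ k $ j = det (\<chi> a b. if b = k then (if a = j then 1 else 0) else A$a$b) / det A"
proof -
  have d: "det A \<noteq> 0" using assms invertible_det_nz by blast
  let ?x = "(\<chi> k. matrix_inv A $ k $ j)"
  have "A *v ?x = (\<chi> a. if a = j then 1 else 0)"
    using inv_props(1)[OF assms]
    by (simp add: vec_eq_iff matrix_vector_mult_def matrix_matrix_mult_def mat_def)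
  then have "?x = (\<chi> k. det(\<chi> i jj. if jj=k then (\<chi> a. if a = j then 1 else 0)$i else A$i$jj) / det A)"
    using cramer[OF d] by blast
  then show ?thesis by (simp add: vec_eq_iff cong: if_cong)
qed

lemma inv_tendsto:
  fixes C :: "'b \<Rightarrow> complex^'n^'n"
  assumes C: "(C \<longlongrightarrow> L) F" and L: "invertible L"
  shows "((\<lambda>t. matrix_inv (C t)) \<longlongrightarrow> matrix_inv L) F"
    "eventually (\<lambda>t. invertible (C t)) F"
proof -
  have dL: "det L \<noteq> 0" using L invertible_det_nz by blast
  have ev: "eventually (\<lambda>t. det (C t) \<noteq> 0) F"
    using tendsto_imp_eventually_ne[OF det_tendsto[OF C] dL] .
  then show "eventually (\<lambda>t. invertible (C t)) F"
    by (rule eventually_mono) (simp add: invertible_det_nz)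
  show "((\<lambda>t. matrix_inv (C t)) \<longlongrightarrow> matrix_inv L) F"
  proof (rule vec_tendstoI, rule vec_tendstoI)
    fix k j
    have "((\<lambda>t. det (\<chi> a b. if b = k then (if a = j then 1 else 0) else C t$a$b) / det (C t))
       \<longlongrightarrow> det (\<chi> a b. if b = k then (if a = j then 1 else 0) else L$a$b) / det L) F"
      apply (intro tendsto_intros det_tendsto tendsto_vec_lambda tendsto_vec_nth C dL)
      subgoal for a b by (cases "b = k") (simp_all add: tendsto_vec_nth[OF tendsto_vec_nth[OF C]])
      done
    then have "((\<lambda>t. det (\<chi> a b. if b = k then (if a = j then 1 else 0) else C t$a$b) / det (C t))
       \<longlongrightarrow> matrix_inv L $ k $ j) F"
      using inv_entry[OF L] by simp
    then show "((\<lambda>t. matrix_inv (C t) $ k $ j) \<longlongrightarrow> matrix_inv L $ k $ j) F"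
      apply (rule Lim_transform_eventually)
      using ev by (rule eventually_mono) (simp add: inv_entry invertible_det_nz)
  qed
qed

lemma vd_iff:
  fixes g :: "real \<Rightarrow> 'b::real_normed_vector"
  shows "(g has_vector_derivative g') (at x) \<longleftrightarrow> ((\<lambda>t. (1/(t - x)) *\<^sub>R (g t - g x)) \<longlongrightarrow> g') (at x)"
proof -
  have "(g has_vector_derivative g') (at x) \<longleftrightarrow>
     ((\<lambda>y. (1/norm(y - x)) *\<^sub>R (g y - (g x + (y - x) *\<^sub>R g'))) \<longlongrightarrow> 0) (at x)"
    by (simp add: has_vector_derivative_def has_derivative_at2 bounded_linear_scaleR_left)
  also have "\<dots> \<longleftrightarrow> ((\<lambda>y. norm ((1/norm(y - x)) *\<^sub>R (g y - (g x + (y - x) *\<^sub>R g')))) \<longlongrightarrow> 0) (at x)"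
    by (rule tendsto_norm_zero_iff[symmetric])
  also have "\<dots> \<longleftrightarrow> ((\<lambda>y. norm ((1/(y - x)) *\<^sub>R (g y - g x) - g')) \<longlongrightarrow> 0) (at x)"
  proof (rule tendsto_cong)
    show "\<forall>\<^sub>F y in at x. norm ((1/norm(y - x)) *\<^sub>R (g y - (g x + (y - x) *\<^sub>R g'))) =
       norm ((1/(y - x)) *\<^sub>R (g y - g x) - g')"
      unfolding eventually_at_filter
    proof (rule always_eventually, intro allI impI)
      fix y assume "y \<noteq> x"
      then have "(1/(y - x)) *\<^sub>R (g y - g x) - g' = (1/(y - x)) *\<^sub>R (g y - (g x + (y - x) *\<^sub>R g'))"
      proof -
        have "(1/(y-x)) *\<^sub>R ((y - x) *\<^sub>R g') = g'" using \<open>y \<noteq> x\<close> by simp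
        then show ?thesis by (simp add: scaleR_diff_right diff_diff_eq[symmetric])
      qed
      then show "norm ((1/norm(y - x)) *\<^sub>R (g y - (g x + (y - x) *\<^sub>R g'))) =
       norm ((1/(y - x)) *\<^sub>R (g y - g x) - g')" by simp
    qed
  qed
  also have "\<dots> \<longleftrightarrow> ((\<lambda>t. (1/(t - x)) *\<^sub>R (g t - g x)) \<longlongrightarrow> g') (at x)"
    by (simp add: tendsto_norm_zero_iff LIM_zero_iff)
  finally show ?thesis .
qed

lemma mm_rdistrib: "((A::'a::semiring_1^'n^'m) + B) ** C = A ** C + B ** C"
  by (vector matrix_matrix_mult_def sum.distrib[symmetric] field_simps)
lemma mm_ldiff: "(A::'a::ring_1^'n^'m) ** (B - C) = A ** B - A ** C"
  by (vector matrix_matrix_mult_def sum_subtractf[symmetric] field_simps)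
lemma mm_rdiff: "((A::'a::ring_1^'n^'m) - B) ** C = A ** C - B ** C"
  by (vector matrix_matrix_mult_def sum_subtractf[symmetric] field_simps)

lemma bb_mm: "bounded_bilinear ((**) :: complex^'n^'n \<Rightarrow> complex^'n^'n \<Rightarrow> complex^'n^'n)"
proof -
  have "bilinear ((**) :: complex^'n^'n \<Rightarrow> complex^'n^'n \<Rightarrow> complex^'n^'n)"
    unfolding bilinear_def
    by (auto intro!: linearI simp: matrix_add_ldistrib mm_rdistrib matrix_scalar_ac scalar_matrix_assoc)
  then show ?thesis by (simp add: bilinear_conv_bounded_bilinear)
qed

lemma car_vd:
  fixes f g :: "real \<Rightarrow> complex^'n^'n"
  assumes f: "(f \<longlongrightarrow> f0) (at 0)" and g: "(g has_vector_derivative g') (at 0)" and g0: "g 0 = 0"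
  shows "((\<lambda>t. f t ** g t) has_vector_derivative (f0 ** g')) (at 0)"
proof -
  interpret bounded_bilinear "(**) :: complex^'n^'n \<Rightarrow> complex^'n^'n \<Rightarrow> complex^'n^'n" by (rule bb_mm)
  have q: "((\<lambda>t. (1/(t - 0)) *\<^sub>R (g t - g 0)) \<longlongrightarrow> g') (at 0)" using g vd_iff by blast
  have "((\<lambda>t. f t ** ((1/(t - 0)) *\<^sub>R (g t - g 0))) \<longlongrightarrow> f0 ** g') (at 0)"
    by (rule tendsto[OF f q])
  then show ?thesis
    unfolding vd_iff by (simp add: g0 scaleR_right)
qed

lemma inv_vd:
  fixes C :: "real \<Rightarrow> complex^'n^'n"
  assumes C: "(C has_vector_derivative C') (at 0)" and C0: "invertible (C 0)"
  shows "((\<lambda>t. matrix_inv (C t)) has_vector_derivative - (matrix_inv (C 0) ** (C' ** matrix_inv (C 0)))) (at 0)"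
proof -
  define H0 where "H0 = matrix_inv (C 0)"
  have Ct: "(C \<longlongrightarrow> C 0) (at 0)"
    using has_vector_derivative_continuous[OF C] by (simp add: continuous_at)
  note it = inv_tendsto[OF Ct C0]
  have evn: "eventually (\<lambda>t. invertible (C t)) (nhds 0)"
    using it(2) C0 by (simp add: eventually_nhds_conv_at)
  have eq: "matrix_inv (C t) = H0 - matrix_inv (C t) ** ((C t - C 0) ** H0)" if "invertible (C t)" for t
  proof -
    have "matrix_inv (C t) ** ((C t - C 0) ** H0) = (matrix_inv (C t) ** C t) ** H0 - matrix_inv (C t) ** (C 0 ** H0)"
      by (simp add: mm_rdiff mm_ldiff matrix_mul_assoc)
    also have "\<dots> = H0 - matrix_inv (C t)"
      using inv_props[OF that] inv_props[OF C0] by (simp add: H0_def)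
    finally show ?thesis by simp
  qed
  have gd: "((\<lambda>t. (C t - C 0) ** H0) has_vector_derivative (C' ** H0)) (at 0)"
  proof -
    interpret bounded_bilinear "(**) :: complex^'n^'n \<Rightarrow> complex^'n^'n \<Rightarrow> complex^'n^'n" by (rule bb_mm)
    have "((\<lambda>t. (C t - C 0) ** H0) has_vector_derivative ((C 0 - C 0) ** 0 + (C' - 0) ** H0)) (at 0)"
      by (rule has_vector_derivative) (auto intro!: derivative_intros C has_vector_derivative_diff[OF C, of "\<lambda>_. C 0" 0, simplified])
    then show ?thesis by simp
  qed
  have "((\<lambda>t. H0 - matrix_inv (C t) ** ((C t - C 0) ** H0)) has_vector_derivative (0 - H0 ** (C' ** H0))) (at 0)"
    apply (intro derivative_intros)
    apply (rule car_vd[OF it(1)[folded H0_def] gd])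
    by simp
  then have "((\<lambda>t. H0 - matrix_inv (C t) ** ((C t - C 0) ** H0)) has_vector_derivative - (H0 ** (C' ** H0))) (at 0)"
    by simp
  then show ?thesis
    unfolding H0_def[symmetric]
    apply (subst has_vector_derivative_cong_ev[where g = "\<lambda>t. H0 - matrix_inv (C t) ** ((C t - C 0) ** H0)"])
    using evn eq C0 apply (auto elim!: eventually_mono simp: H0_def)
    done
qed

lemma smat_mm: "smat c A ** B = smat c (A ** B)"
  by (simp add: smat_def matrix_matrix_mult_def vec_eq_iff sum_distrib_left mult.assoc)
lemma mm_smat: "A ** smat c B = smat c (A ** B)"
  by (simp add: smat_def matrix_matrix_mult_def vec_eq_iff sum_distrib_left mult_ac)
lemma smat_add: "smat c (A + B) = smat c A + smat c B"
  by (simp add: smat_def vec_eq_iff algebra_simps)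
lemma smat_diff: "smat c (A - B) = smat c A - smat c B"
  by (simp add: smat_def vec_eq_iff algebra_simps)
lemma smat_neg: "smat c (- A) = - smat c A"
  by (simp add: smat_def vec_eq_iff algebra_simps)
lemma smat_smat: "smat c (smat d A) = smat (c * d) A"
  by (simp add: smat_def vec_eq_iff algebra_simps)
lemma smat_scaleR: "smat c (r *\<^sub>R A) = r *\<^sub>R smat c A"
  by (simp add: smat_def vec_eq_iff algebra_simps scaleR_conv_of_real)

lemma bl_smat: "bounded_linear (smat c :: complex^'n^'n \<Rightarrow> complex^'n^'n)"
proof -
  have "linear (smat c :: complex^'n^'n \<Rightarrow> complex^'n^'n)"
    by (auto intro!: linearI simp: smat_add smat_scaleR)
  then show ?thesis by (simp add: linear_conv_bounded_linear)
qed

lemma curve_fst: "fst (p + t *\<^sub>R u) = fst p + t *\<^sub>R fst u" by simp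
lemma curve_snd: "snd (p + t *\<^sub>R u) = snd p + t *\<^sub>R snd u" by simp

definition Mq :: "complex \<Rightarrow> 'n::finite vpt \<Rightarrow> 'n cmat" where
  "Mq \<epsilon> q = matrix_inv (snd q) - smat \<epsilon> (fst q)"

definition dM :: "complex \<Rightarrow> 'n::finite vpt \<Rightarrow> 'n vpt \<Rightarrow> 'n cmat" where
  "dM \<epsilon> p u = - (matrix_inv (snd p) ** (snd u ** matrix_inv (snd p))) - smat \<epsilon> (fst u)"

lemma M_vd:
  assumes Y: "invertible (snd p)"
  shows "((\<lambda>t::real. Mq \<epsilon> (p + t *\<^sub>R u)) has_vector_derivative dM \<epsilon> p u) (at 0)"
proof -
  have c: "((\<lambda>t::real. snd p + t *\<^sub>R snd u) has_vector_derivative snd u) (at 0)"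
    by (auto intro!: derivative_eq_intros)
  have c2: "((\<lambda>t::real. fst p + t *\<^sub>R fst u) has_vector_derivative fst u) (at 0)"
    by (auto intro!: derivative_eq_intros)
  have "((\<lambda>t::real. matrix_inv (snd p + t *\<^sub>R snd u) - smat \<epsilon> (fst p + t *\<^sub>R fst u)) has_vector_derivative
      - (matrix_inv (snd p) ** (snd u ** matrix_inv (snd p))) - smat \<epsilon> (fst u)) (at 0)"
    apply (rule has_vector_derivative_diff)
    using inv_vd[OF c] Y apply simp
    by (rule bounded_linear.has_vector_derivative[OF bl_smat c2])
  then show ?thesis by (simp add: Mq_def dM_def)
qed

lemma dF_eq:
  assumes Y: "invertible (snd p)" and M: "invertible (Mq \<epsilon> p)"
  shows "dmat (\<lambda>q. matrix_inv (matrix_inv (snd q) - smat \<epsilon> (fst q))) p u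
     = - (matrix_inv (Mq \<epsilon> p) ** (dM \<epsilon> p u ** matrix_inv (Mq \<epsilon> p)))"
proof -
  have "((\<lambda>t::real. matrix_inv (Mq \<epsilon> (p + t *\<^sub>R u))) has_vector_derivative
     - (matrix_inv (Mq \<epsilon> (p + 0 *\<^sub>R u)) ** (dM \<epsilon> p u ** matrix_inv (Mq \<epsilon> (p + 0 *\<^sub>R u))))) (at 0)"
    by (rule inv_vd[OF M_vd[OF Y]]) (use M in simp)
  then show ?thesis unfolding dmat_def Mq_def by (simp add: vector_derivative_at)
qed

lemma dG_eq:
  assumes Y: "invertible (snd p)"
  shows "dmat (\<lambda>q. fst q ** (matrix_inv (snd q) - smat \<epsilon> (fst q))) p u
     = fst p ** dM \<epsilon> p u + fst u ** Mq \<epsilon> p"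
proof -
  interpret bounded_bilinear "(**) :: complex^'n^'n \<Rightarrow> complex^'n^'n \<Rightarrow> complex^'n^'n" by (rule bb_mm)
  have c2: "((\<lambda>t::real. fst p + t *\<^sub>R fst u) has_vector_derivative fst u) (at 0)"
    by (auto intro!: derivative_eq_intros)
  have "((\<lambda>t::real. (fst p + t *\<^sub>R fst u) ** Mq \<epsilon> (p + t *\<^sub>R u)) has_vector_derivative
     (fst p + 0 *\<^sub>R fst u) ** dM \<epsilon> p u + fst u ** Mq \<epsilon> (p + 0 *\<^sub>R u)) (at 0)"
    by (rule has_vector_derivative[OF c2 M_vd[OF Y]])
  then show ?thesis unfolding dmat_def Mq_def by (simp add: vector_derivative_at)
qed

lemma mm_lneg: "(- (A::'a::ring_1^'n^'m)) ** C = - (A ** C)"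
  by (vector matrix_matrix_mult_def sum_negf[symmetric] field_simps)
lemma mm_rneg: "(A::'a::ring_1^'n^'m) ** (- C) = - (A ** C)"
  by (vector matrix_matrix_mult_def sum_negf[symmetric] field_simps)
lemma trace_smat: "trace (smat c A) = c * trace A"
  by (simp add: smat_def trace_def sum_distrib_left)
lemma trace_neg: "trace (- (A::'a::comm_ring_1^'n^'n)) = - trace A"
  by (simp add: trace_def sum_negf)
lemma rot3: "trace ((A::complex^'n^'n) ** (B ** C)) = trace (C ** (A ** B))"
  by (metis matrix_mul_assoc trace_mul_sym)
lemma rot4: "trace ((A::complex^'n^'n) ** (B ** (C ** D))) = trace (D ** (A ** (B ** C)))"
  by (metis matrix_mul_assoc trace_mul_sym)
lemma rot5: "trace ((A::complex^'n^'n) ** (B ** (C ** (D ** E)))) = trace (E ** (A ** (B ** (C ** D))))"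
  by (metis matrix_mul_assoc trace_mul_sym)

lemma inv_cancel:
  assumes "invertible (A::complex^'n^'n)"
  shows "A ** (matrix_inv A ** Z) = Z" "matrix_inv A ** (A ** Z) = Z"
  using inv_props[OF assms] by (simp_all add: matrix_mul_assoc)

lemmas ring_simps = matrix_mul_assoc[symmetric] matrix_add_ldistrib mm_rdistrib mm_ldiff mm_rdiff mm_lneg mm_rneg
  smat_mm mm_smat smat_add smat_diff smat_neg smat_smat

lemma rot6: "trace ((A::complex^'n^'n) ** (B ** (C ** (D ** (E ** G))))) = trace (G ** (A ** (B ** (C ** (D ** E)))))"
  by (metis matrix_mul_assoc trace_mul_sym)

lemma omega_abstract:
  fixes Mi MM K V1 X N U :: "complex^'n^'n"
  assumes "Mi ** MM = mat 1" "MM ** Mi = mat 1"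
  shows "trace ((Mi ** K) ** (V1 ** MM - X ** N) - (Mi ** (N ** Mi)) ** ((U - X ** K) ** MM))
    = trace (K ** V1) - trace (N ** (Mi ** (K ** X + U - X ** K)))"
proof -
  have c: "MM ** (Mi ** Z) = Z" for Z using assms by (simp add: matrix_mul_assoc)
  show ?thesis
    by (simp add: ring_simps trace_add trace_sub rot4[of Mi K V1 MM] rot4[of Mi K X N]
      rot5[of Mi N Mi U MM] rot6[of Mi N Mi X K MM] c)
qed

definition U0 :: "complex \<Rightarrow> 'n::finite vpt \<Rightarrow> 'n vpt \<Rightarrow> 'n vpt" where
  "U0 \<epsilon> p \<alpha> = (let X = fst p; Y = snd p; A = fst \<alpha>; B = snd \<alpha> in
     (X ** A - A ** X - B ** Y + smat \<epsilon> (Y ** (B ** (Y ** X))),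
      Y ** A - smat \<epsilon> (Y ** (X ** (A ** Y))) + smat \<epsilon> (Y ** (B ** (Y ** Y))) - smat \<epsilon> (Y ** (Y ** (B ** Y)))))"

lemma omega_id:
  fixes p \<alpha> v :: "'n::finite vpt"
  assumes Y: "invertible (snd p)" and M: "invertible (Mq \<epsilon> p)"
  defines "u \<equiv> U0 \<epsilon> p \<alpha>"
  shows "trace ((- (matrix_inv (Mq \<epsilon> p) ** (dM \<epsilon> p u ** matrix_inv (Mq \<epsilon> p)))) ** (fst p ** dM \<epsilon> p v + fst v ** Mq \<epsilon> p)
           - (- (matrix_inv (Mq \<epsilon> p) ** (dM \<epsilon> p v ** matrix_inv (Mq \<epsilon> p)))) ** (fst p ** dM \<epsilon> p u + fst u ** Mq \<epsilon> p))
         = vpair \<alpha> v"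
proof -
  obtain X Yy where p: "p = (X, Yy)" by (cases p)
  obtain A B where a: "\<alpha> = (A, B)" by (cases \<alpha>)
  obtain V1 V2 where v: "v = (V1, V2)" by (cases v)
  define Yi where "Yi = matrix_inv Yy"
  define MM where "MM = Mq \<epsilon> p"
  define Mi where "Mi = matrix_inv MM"
  define K where "K = A - smat \<epsilon> (Yy ** (B ** Yy))"
  define U where "U = fst u"
  have Yv: "invertible Yy" using Y p by simp
  have Mv: "invertible MM" using M MM_def by simp
  note yc = inv_cancel[OF Yv, folded Yi_def] inv_props[OF Yv, folded Yi_def]
  note mc = inv_cancel[OF Mv, folded Mi_def] inv_props[OF Mv, folded Mi_def]
  have MMe: "MM = Yi - smat \<epsilon> X" by (simp add: MM_def Mq_def p Yi_def)
  have Ue: "U = X ** A - A ** X - B ** Yy + smat \<epsilon> (Yy ** (B ** (Yy ** X)))"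
    by (simp add: U_def u_def U0_def p a)
  have dMu: "dM \<epsilon> p u = - (K ** MM)"
    by (simp add: dM_def u_def U0_def p a K_def MMe Yi_def[symmetric] ring_simps yc algebra_simps)
  have dMv: "dM \<epsilon> p v = - (Yi ** (V2 ** Yi) + smat \<epsilon> V1)"
    by (simp add: dM_def p v Yi_def)
  have key3: "K ** X + U - X ** K = - (MM ** (Yy ** (B ** Yy)))"
    by (simp add: K_def Ue MMe ring_simps yc algebra_simps)
  have dFu: "- (Mi ** (dM \<epsilon> p u ** Mi)) = Mi ** K" by (simp add: dMu ring_simps mc)
  have dGu: "fst p ** dM \<epsilon> p u + fst u ** MM = (U - X ** K) ** MM"
    unfolding dMu by (simp add: ring_simps p U_def)
  define N where "N = Yi ** (V2 ** Yi) + smat \<epsilon> V1"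
  have dFv: "- (Mi ** (dM \<epsilon> p v ** Mi)) = Mi ** (N ** Mi)" by (simp add: dMv N_def ring_simps)
  have dGv: "fst p ** dM \<epsilon> p v + fst v ** MM = V1 ** MM - X ** N"
    unfolding dMv N_def by (simp add: p v ring_simps)
  have "trace ((- (Mi ** (dM \<epsilon> p u ** Mi))) ** (fst p ** dM \<epsilon> p v + fst v ** MM)
           - (- (Mi ** (dM \<epsilon> p v ** Mi))) ** (fst p ** dM \<epsilon> p u + fst u ** MM))
      = trace (K ** V1) - trace (N ** (Mi ** (K ** X + U - X ** K)))"
    unfolding dFu dGu dFv dGv by (rule omega_abstract[OF mc(4) mc(3)])
  also have "\<dots> = trace (K ** V1) + trace (N ** (Yy ** (B ** Yy)))"
    unfolding key3 by (simp add: ring_simps mc trace_neg)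
  also have "\<dots> = vpair \<alpha> v"
    by (simp add: K_def N_def vpair_def a v ring_simps yc trace_add trace_sub trace_smat
      rot4[of Yi V2 B Yy] rot4[of Yy B Yy V1] trace_mul_sym[of V2 B])
  finally show ?thesis unfolding MM_def Mi_def .
qed


lemma trace_E: "trace ((\<chi> a b. if a = j \<and> b = i then 1 else 0) ** (Z::complex^'n^'n)) = Z $ i $ j"
proof -
  have "trace ((\<chi> a b. if a = j \<and> b = i then 1 else 0) ** Z) = (\<Sum>a\<in>UNIV. \<Sum>k\<in>UNIV. (if a = j \<and> k = i then 1 else 0) * Z $ k $ a)"
    by (simp add: trace_def matrix_matrix_mult_def)
  also have "\<dots> = (\<Sum>a\<in>UNIV. if a = j then Z $ i $ a else 0)"
  proof (rule sum.cong[OF refl])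
    fix a
    show "(\<Sum>k\<in>UNIV. (if a = j \<and> k = i then 1 else 0) * Z $ k $ a) = (if a = j then Z $ i $ a else 0)"
      by (cases "a = j") (simp_all add: if_distrib[of "\<lambda>x. x * _"] cong: if_cong)
  qed
  also have "\<dots> = Z $ i $ j" by simp
  finally show ?thesis .
qed

lemma vpair_zero:
  fixes u :: "'n::finite vpt"
  assumes "\<And>\<gamma>. vpair \<gamma> u = 0"
  shows "u = 0"
proof -
  have 1: "fst u $ i $ j = 0" for i j
    using assms[of "((\<chi> a b. if a = j \<and> b = i then 1 else 0), 0)"] by (simp add: vpair_def trace_E)
  have 2: "snd u $ i $ j = 0" for i j
    using assms[of "(0, (\<chi> a b. if a = j \<and> b = i then 1 else 0))"] by (simp add: vpair_def trace_E)
  show ?thesis using 1 2 by (simp add: prod_eq_iff vec_eq_iff)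
qed

lemma vpair_sym: "vpair a b = vpair b a"
  by (simp only: vpair_def trace_add trace_mul_sym[of "fst a"] trace_mul_sym[of "snd a"])

lemma vpair_diff: "vpair g (u - w) = vpair g u - vpair g w"
  by (simp add: vpair_def mm_ldiff trace_add trace_sub)

lemma vpair_unique:
  fixes u w :: "'n::finite vpt"
  assumes "\<And>\<gamma>. vpair \<gamma> u = vpair \<gamma> w"
  shows "u = w"
  using vpair_zero[of "u - w"] assms by (simp add: vpair_diff)

lemma psi_formula:
  "psi_bivector (nc_add Pi0 (nc_smult \<epsilon> Pi_inf)) p \<alpha> \<beta> = vpair \<beta> (U0 \<epsilon> p \<alpha>)"
proof -
  obtain X Y where p: "p = (X, Y)" by (cases p)
  obtain A1 B1 where a: "\<alpha> = (A1, B1)" by (cases \<alpha>)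
  obtain A2 B2 where b: "\<beta> = (A2, B2)" by (cases \<beta>)
  note r = rot3[of X A1 A2] rot3[of Y A1 B2] rot5[of Y B1 Y X A2] rot5[of Y B1 Y Y B2]
    rot5[of Y X A1 Y B2] rot5[of Y Y B1 Y B2] rot3[of A2 B1 Y, symmetric] rot3[of A1 X A2]
    rot3[of A2 A1 X, symmetric] rot3[of A2 B1 Y, symmetric]
    rot5[of B2 Y X A1 Y, symmetric] rot5[of B2 Y Y B1 Y, symmetric]
    rot3[of B1 Y A2] rot5[of A2 Y B1 Y X, symmetric] rot5[of Y Y B2 Y B1] rot5[of B1 Y Y B2 Y]
  have e13: "trace (Y ** (X ** (A2 ** (Y ** B1)))) = trace (A2 ** (Y ** (B1 ** (Y ** X))))"
    by (metis rot5)
  show ?thesis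
    unfolding p a b
    apply (simp add: psi_bivector_def psi_tensor_def Pi0_def Pi_inf_def nc_add_def nc_smult_def nc_mult_def
       nc_comm_def gen_def wdeg_def starred_def U0_def vpair_def)
    apply (simp add: matrix_add_ldistrib mm_ldiff trace_add trace_sub mm_smat trace_smat r e13)
    done
qed
lemma det_holo:
  fixes F :: "complex \<Rightarrow> complex^'n^'n"
  assumes "\<And>i j. (\<lambda>z. F z $ i $ j) holomorphic_on S"
  shows "(\<lambda>z. det (F z)) holomorphic_on S"
  unfolding det_def by (intro holomorphic_intros assms)

lemma mm_holo:
  fixes F G :: "complex \<Rightarrow> complex^'n^'n"
  assumes "\<And>i j. (\<lambda>z. F z $ i $ j) holomorphic_on S" "\<And>i j. (\<lambda>z. G z $ i $ j) holomorphic_on S"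
  shows "(\<lambda>z. (F z ** G z) $ i $ j) holomorphic_on S"
  unfolding matrix_matrix_mult_def by (simp, intro holomorphic_intros assms)

lemma good_cond:
  fixes X Y :: "complex^'n^'n"
  assumes "det Y * det (mat 1 - smat \<epsilon> (Y ** X)) \<noteq> 0"
  shows "invertible Y \<and> invertible (matrix_inv Y - smat \<epsilon> X)"
proof -
  have dY: "det Y \<noteq> 0" and dN: "det (mat 1 - smat \<epsilon> (Y ** X)) \<noteq> 0" using assms by auto
  have Y: "invertible Y" using dY invertible_det_nz by blast
  have Yi: "invertible (matrix_inv Y)" using inv_props[OF Y] unfolding invertible_def by blast
  have e: "matrix_inv Y - smat \<epsilon> X = matrix_inv Y ** (mat 1 - smat \<epsilon> (Y ** X))"
    using inv_props[OF Y] by (simp add: mm_ldiff mm_smat matrix_mul_assoc)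
  have "det (matrix_inv Y - smat \<epsilon> X) \<noteq> 0"
    unfolding e det_mul using dN Yi invertible_det_nz by auto
  then show ?thesis using Y invertible_det_nz by blast
qed

lemma dense_good:
  "closure {p :: 'n::finite vpt. invertible (snd p) \<and> invertible (matrix_inv (snd p) - smat \<epsilon> (fst p))} = UNIV"
proof -
  {
    fix p0 :: "'n vpt" and e :: real
    assume e: "e > 0"
    obtain X0 Y0 where p0: "p0 = (X0, Y0)" by (cases p0)
    define d :: "'n vpt" where "d = (0, mat 1) - p0"
    define Xz where "Xz = (\<lambda>z. (\<chi> i j. X0$i$j + z * (0 - X0$i$j)) :: complex^'n^'n)"
    define Yz where "Yz = (\<lambda>z. (\<chi> i j. Y0$i$j + z * (mat 1$i$j - Y0$i$j)) :: complex^'n^'n)"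
    define g where "g = (\<lambda>z. det (Yz z) * det (mat 1 - smat \<epsilon> (Yz z ** Xz z)))"
    have hX: "(\<lambda>z. Xz z $ i $ j) holomorphic_on UNIV" for i j
      unfolding Xz_def by (simp, intro holomorphic_intros)
    have hY: "(\<lambda>z. Yz z $ i $ j) holomorphic_on UNIV" for i j
      unfolding Yz_def by (simp, intro holomorphic_intros)
    have hN: "(\<lambda>z. (mat 1 - smat \<epsilon> (Yz z ** Xz z)) $ i $ j) holomorphic_on UNIV" for i j
      unfolding smat_def by (simp, intro holomorphic_intros mm_holo hX hY)
    have hg: "g holomorphic_on UNIV"
      unfolding g_def by (intro holomorphic_intros det_holo hY hN)
    have "Xz 1 = 0" "Yz 1 = mat 1" by (simp_all add: Xz_def Yz_def vec_eq_iff)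
    moreover have "smat \<epsilon> (0::complex^'n^'n) = 0" by (simp add: smat_def vec_eq_iff)
    ultimately have g1: "g 1 = 1" by (simp add: g_def)
    define \<delta> where "\<delta> = e / (norm d + 1)"
    have \<delta>: "\<delta> > 0" using e unfolding \<delta>_def by (intro divide_pos_pos) (auto intro: add_nonneg_pos)
    have "\<exists>t\<in>{0<..<\<delta>}. g (of_real t) \<noteq> 0"
    proof (rule ccontr)
      assume "\<not> ?thesis"
      then have z: "\<And>z. z \<in> of_real ` {0<..<\<delta>} \<Longrightarrow> g z = 0" by auto
      have lim: "(0::complex) islimpt (of_real ` {0<..<\<delta>})"
        unfolding islimpt_approachable
      proof (intro allI impI)
        fix r :: real assume r: "r > 0"
        let ?t = "min \<delta> r / 2"
        have f1: "?t \<in> {0<..<\<delta>}" using r \<delta> by auto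
        have f2: "complex_of_real ?t \<noteq> 0" using r \<delta> by simp
        have f3: "dist (complex_of_real ?t) 0 = ?t" using r \<delta> by (simp add: dist_norm)
        have f4: "?t < r" using r \<delta> by linarith
        show "\<exists>x'::complex\<in>of_real ` {0<..<\<delta>}. x' \<noteq> 0 \<and> dist x' 0 < r"
          apply (rule bexI[of _ "complex_of_real ?t"])
          using f2 f3 f4 apply simp
          using f1 by (rule imageI)
      qed
      have "g 1 = 0"
        by (rule analytic_continuation[OF hg open_UNIV connected_UNIV _ _ lim z]) auto
      then show False using g1 by simp
    qed
    then obtain t where t: "t \<in> {0<..<\<delta>}" "g (of_real t) \<noteq> 0" by blast
    define y where "y = p0 + t *\<^sub>R d"
    have fy: "fst y = Xz (of_real t)" and sy: "snd y = Yz (of_real t)"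
      by (simp_all add: y_def d_def p0 Xz_def Yz_def vec_eq_iff) (simp_all add: scaleR_conv_of_real algebra_simps)
    have "invertible (snd y) \<and> invertible (matrix_inv (snd y) - smat \<epsilon> (fst y))"
      using good_cond t(2) unfolding fy sy g_def by blast
    moreover have "dist y p0 < e"
    proof -
      have "dist y p0 = t * norm d" using t by (simp add: y_def dist_norm)
      also have "\<dots> \<le> \<delta> * norm d" using t by (intro mult_right_mono) auto
      also have "\<dots> < \<delta> * (norm d + 1)" using \<delta> by simp
      also have "\<dots> = e" proof -
        have "norm d + 1 \<noteq> 0" using norm_ge_zero[of d] by linarith
        then show ?thesis unfolding \<delta>_def by simp
      qed
      finally show ?thesis .
    qed
    ultimately have "\<exists>y\<in>{p :: 'n::finite vpt. invertible (snd p) \<and> invertible (matrix_inv (snd p) - smat \<epsilon> (fst p))}. dist y p0 < e"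
      by blast
  }
  then show ?thesis by (auto simp: closure_approachable)
qed


lemma nondeg_and_inv:
  fixes p :: "'n::finite vpt"
  assumes Y: "invertible (snd p)" and M: "invertible (matrix_inv (snd p) - smat \<epsilon> (fst p))"
  shows "nondegenerate (psi_bivector (nc_add Pi0 (nc_smult \<epsilon> Pi_inf)) p)
    \<and> inverse_form (psi_bivector (nc_add Pi0 (nc_smult \<epsilon> Pi_inf)) p)
                (tr_wedge (\<lambda>q. matrix_inv (matrix_inv (snd q) - smat \<epsilon> (fst q)))
                          (\<lambda>q. fst q ** (matrix_inv (snd q) - smat \<epsilon> (fst q))) p)"
proof
  have M': "invertible (Mq \<epsilon> p)" using M by (simp add: Mq_def)
  show "nondegenerate (psi_bivector (nc_add Pi0 (nc_smult \<epsilon> Pi_inf)) p)"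
    unfolding nondegenerate_def
  proof (intro allI impI)
    fix \<alpha> :: "'n vpt" assume a: "\<alpha> \<noteq> 0"
    show "\<exists>\<beta>. psi_bivector (nc_add Pi0 (nc_smult \<epsilon> Pi_inf)) p \<alpha> \<beta> \<noteq> 0"
    proof (rule ccontr)
      assume "\<not> ?thesis"
      then have h: "\<forall>\<beta>. psi_bivector (nc_add Pi0 (nc_smult \<epsilon> Pi_inf)) p \<alpha> \<beta> = 0" by blast
      have "\<And>\<gamma>. vpair \<gamma> (U0 \<epsilon> p \<alpha>) = 0"
        using h by (simp only: psi_formula)
      then have u0: "U0 \<epsilon> p \<alpha> = 0" by (rule vpair_zero)
      have z: "smat \<epsilon> (0::complex^'n^'n) = 0" by (simp add: smat_def vec_eq_iff)
      have "dM \<epsilon> p (U0 \<epsilon> p \<alpha>) = 0" unfolding u0 by (simp add: dM_def z)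
      then have "vpair \<alpha> v = 0" for v
        using omega_id[OF Y M', of \<alpha> v] u0 by (simp add: trace_def)
      then have "\<And>v. vpair v \<alpha> = 0" by (simp add: vpair_sym)
      then have "\<alpha> = 0" by (rule vpair_zero)
      then show False using a by simp
    qed
  qed
  show "inverse_form (psi_bivector (nc_add Pi0 (nc_smult \<epsilon> Pi_inf)) p)
                (tr_wedge (\<lambda>q. matrix_inv (matrix_inv (snd q) - smat \<epsilon> (fst q)))
                          (\<lambda>q. fst q ** (matrix_inv (snd q) - smat \<epsilon> (fst q))) p)"
    unfolding inverse_form_def
  proof (intro allI impI)
    fix \<alpha> u v :: "'n vpt"
    assume h: "\<forall>\<gamma>. vpair \<gamma> u = psi_bivector (nc_add Pi0 (nc_smult \<epsilon> Pi_inf)) p \<alpha> \<gamma>"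
    have u: "u = U0 \<epsilon> p \<alpha>"
    proof (rule vpair_unique)
      fix \<gamma> :: "'n vpt"
      show "vpair \<gamma> u = vpair \<gamma> (U0 \<epsilon> p \<alpha>)"
        using h[rule_format, of \<gamma>] by (simp only: psi_formula)
    qed
    show "tr_wedge (\<lambda>q. matrix_inv (matrix_inv (snd q) - smat \<epsilon> (fst q)))
                          (\<lambda>q. fst q ** (matrix_inv (snd q) - smat \<epsilon> (fst q))) p u v = vpair \<alpha> v"
      unfolding tr_wedge_def dF_eq[OF Y M'] dG_eq[OF Y] u by (rule omega_id[OF Y M'])
  qed
qed

theorem mainTheorem11:
  fixes \<epsilon> :: complex
  shows "closure {p :: 'n::finite vpt.
            nondegenerate (psi_bivector (nc_add Pi0 (nc_smult \<epsilon> Pi_inf)) p)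
            \<and> invertible (snd p)
            \<and> invertible (matrix_inv (snd p) - smat \<epsilon> (fst p))} = UNIV
    \<and> (\<forall>p :: 'n vpt.
          nondegenerate (psi_bivector (nc_add Pi0 (nc_smult \<epsilon> Pi_inf)) p)
          \<and> invertible (snd p)
          \<and> invertible (matrix_inv (snd p) - smat \<epsilon> (fst p))
          \<longrightarrow> inverse_form (psi_bivector (nc_add Pi0 (nc_smult \<epsilon> Pi_inf)) p)
                (tr_wedge (\<lambda>q. matrix_inv (matrix_inv (snd q) - smat \<epsilon> (fst q)))
                          (\<lambda>q. fst q ** (matrix_inv (snd q) - smat \<epsilon> (fst q))) p))"
proof
  have sub: "{p :: 'n vpt. invertible (snd p) \<and> invertible (matrix_inv (snd p) - smat \<epsilon> (fst p))}
     \<subseteq> {p :: 'n::finite vpt.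
            nondegenerate (psi_bivector (nc_add Pi0 (nc_smult \<epsilon> Pi_inf)) p)
            \<and> invertible (snd p)
            \<and> invertible (matrix_inv (snd p) - smat \<epsilon> (fst p))}"
    using nondeg_and_inv by blast
  show "closure {p :: 'n::finite vpt.
            nondegenerate (psi_bivector (nc_add Pi0 (nc_smult \<epsilon> Pi_inf)) p)
            \<and> invertible (snd p)
            \<and> invertible (matrix_inv (snd p) - smat \<epsilon> (fst p))} = UNIV"
    using closure_mono[OF sub] dense_good[of \<epsilon>, where 'n='n] by blast
  show "\<forall>p :: 'n vpt.
          nondegenerate (psi_bivector (nc_add Pi0 (nc_smult \<epsilon> Pi_inf)) p)
          \<and> invertible (snd p)
          \<and> invertible (matrix_inv (snd p) - smat \<epsilon> (fst p))
          \<longrightarrow> inverse_form (psi_bivector (nc_add Pi0 (nc_smult \<epsilon> Pi_inf)) p)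
                (tr_wedge (\<lambda>q. matrix_inv (matrix_inv (snd q) - smat \<epsilon> (fst q)))
                          (\<lambda>q. fst q ** (matrix_inv (snd q) - smat \<epsilon> (fst q))) p)"
    using nondeg_and_inv by blast
qed

end
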